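(* Let $p\in\mathbb Q\cap(2,\infty)$, write $1/p=a/b$ with $a,b\in\mathbb N$ coprime, and let $k=\lceil\log_2(b+1)\rceil$. Then $\{(u,v,t)\in\mathbb R^3_+:v^{p/(p-2)}\le tu^{2/(p-2)}\}$ equals the set of $(u,v,t)\in\mathbb R^3$ for which there exist $\boldsymbol z^i\in\mathbb R^{2^i}$, $i=1,\dots,k-1$, with $$\begin{cases}\|(v,\tfrac12(z^1_1-z^1_2))\|_2\le\tfrac12(z^1_1+z^1_2)\\ \|(z^i_j,\tfrac12(z^{i+1}_{2j-1}-z^{i+1}_{2j}))\|_2\le\tfrac12(z^{i+1}_{2j-1}+z^{i+1}_{2j}) & i=1,\dots,k-2,\ j=1,\dots,2^i\\ z^{k-1}_j\le u & j=1,\dots,a\\ z^{k-1}_j\le t & j=a+1,\dots,\lfloor b/2\rfloor\\ \|(z^{k-1}_j,\tfrac12(t-v))\|_2\le\tfrac12(t+v) & j=\lfloor b/2\rfloor+1,\dots,\lceil b/2\rceil\\ z^{k-1}_j\le v & j=\lceil b/2\rceil+1,\dots,2^{k-1}\\ \boldsymbol z^i\ge\boldsymbol0 & i=1,\dots,k-1\\ u\ge0,\ v\ge0,\ t\ge0.\end{cases}$$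
   Context: $\|\cdot\|_2$ is the Euclidean norm of the indicated 2-vector; $\mathbb R^3_+$ is the nonnegative orthant. *)

theory Defs
  imports "HOL-Analysis.Analysis"
begin

end

theory Submission
  imports Defs
begin

lemma norm_pair_iff:
  fixes x A B :: real
  shows "norm (x, (A - B) / 2) \<le> (A + B) / 2 \<longleftrightarrow> 0 \<le> A + B \<and> x^2 \<le> A * B"
proof -
  have "norm (x, (A - B) / 2) = sqrt (x^2 + ((A - B)/2)^2)"
    by (simp add: norm_prod_def power_divide)
  moreover have "sqrt (x^2 + ((A - B)/2)^2) \<le> (A + B) / 2 \<longleftrightarrow>
      0 \<le> (A + B)/2 \<and> x^2 + ((A - B)/2)^2 \<le> ((A + B)/2)^2" (is "sqrt ?X \<le> ?r \<longleftrightarrow> _")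
  proof
    assume h: "sqrt ?X \<le> ?r"
    have "0 \<le> sqrt ?X" by simp
    then show "0 \<le> ?r \<and> ?X \<le> ?r^2" using h sqrt_le_D[OF h] by linarith
  next
    assume "0 \<le> ?r \<and> ?X \<le> ?r^2"
    then show "sqrt ?X \<le> ?r" using real_le_lsqrt by blast
  qed
  moreover have "x^2 + ((A - B)/2)^2 \<le> ((A + B)/2)^2 \<longleftrightarrow> x^2 \<le> A * B"
    by (simp add: power2_eq_square field_simps)
  ultimately show ?thesis by auto
qed

lemma prod_pairs:
  fixes f :: "nat \<Rightarrow> real"
  shows "(\<Prod>j\<in>{1..2*m}. f j) = (\<Prod>j\<in>{1..m}. f (2*j-1) * f (2*j))"
proof (induction m)
  case 0 then show ?case by simp
next
  case (Suc m)
  have "{1..2*Suc m} = insert (2*m+2) (insert (2*m+1) {1..2*m})" by auto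
  then have "(\<Prod>j\<in>{1..2*Suc m}. f j) = f (2*m+2) * (f (2*m+1) * (\<Prod>j\<in>{1..2*m}. f j))"
    by simp
  also have "\<dots> = (\<Prod>j\<in>{1..m}. f (2*j-1) * f (2*j)) * (f (2*Suc m - 1) * f (2*Suc m))"
    using Suc by simp
  also have "\<dots> = (\<Prod>j\<in>{1..Suc m}. f (2*j-1) * f (2*j))"
    by (simp add: atLeastAtMostSuc_conv mult.commute)
  finally show ?case .
qed

lemma tree_le:
  fixes P :: "nat \<Rightarrow> real"
  assumes "\<And>i. 1 \<le> i \<Longrightarrow> i < n \<Longrightarrow> P i ^ 2 \<le> P (i+1)"
    and "\<And>i. 1 \<le> i \<Longrightarrow> i \<le> n \<Longrightarrow> 0 \<le> P i" and "1 \<le> n"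
  shows "P 1 ^ (2^(n-1)) \<le> P n"
proof -
  have "\<forall>m. 1 + m \<le> n \<longrightarrow> P 1 ^ (2^m) \<le> P (1+m)"
  proof (intro allI)
    fix m show "1 + m \<le> n \<longrightarrow> P 1 ^ (2^m) \<le> P (1+m)"
    proof (induction m)
      case 0 then show ?case by simp
    next
      case (Suc m)
      show ?case
      proof
        assume h: "1 + Suc m \<le> n"
        have "P 1 ^ (2^Suc m) = (P 1 ^ (2^m))^2" using power_mult[of "P 1" "2^m" 2] by (simp add: mult.commute)
        also have "\<dots> \<le> P (1+m) ^ 2"
          using Suc h assms(2)[of 1] by (intro power_mono) auto
        also have "\<dots> \<le> P (1 + Suc m)" using assms(1)[of "1+m"] h by simp
        finally show "P 1 ^ (2^Suc m) \<le> P (1 + Suc m)" .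
      qed
    qed
  qed
  moreover have "1 + (n-1) = n" using assms(3) by simp
  ultimately show ?thesis by (metis order.refl)
qed

lemma tree_eq:
  fixes P :: "nat \<Rightarrow> real"
  assumes "\<And>i. 1 \<le> i \<Longrightarrow> i < n \<Longrightarrow> P i ^ 2 = P (i+1)" and "1 \<le> n"
  shows "P 1 ^ (2^(n-1)) = P n"
proof -
  have "\<forall>m. 1 + m \<le> n \<longrightarrow> P 1 ^ (2^m) = P (1+m)"
  proof (intro allI)
    fix m show "1 + m \<le> n \<longrightarrow> P 1 ^ (2^m) = P (1+m)"
    proof (induction m)
      case 0 then show ?case by simp
    next
      case (Suc m)
      show ?case
      proof
        assume h: "1 + Suc m \<le> n"
        have "P 1 ^ (2^Suc m) = (P 1 ^ (2^m))^2" using power_mult[of "P 1" "2^m" 2] by (simp add: mult.commute)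
        also have "\<dots> = P (1+m) ^ 2" using Suc h by simp
        also have "\<dots> = P (1 + Suc m)" using assms(1)[of "1+m"] h by simp
        finally show "P 1 ^ (2^Suc m) = P (1 + Suc m)" .
      qed
    qed
  qed
  moreover have "1 + (n-1) = n" using assms(2) by simp
  ultimately show ?thesis by (metis order.refl)
qed

lemma prod_split_ivl:
  fixes f :: "nat \<Rightarrow> real"
  assumes "m \<le> n"
  shows "(\<Prod>j\<in>{1..n}. f j) = (\<Prod>j\<in>{1..m}. f j) * (\<Prod>j\<in>{m+1..n}. f j)"
proof -
  have "{1..n} = {1..m} \<union> {m+1..n}" using assms by auto
  then show ?thesis by (simp add: prod.union_disjoint[symmetric] ivl_disj_int)
qed

definition leaf :: "nat \<Rightarrow> nat \<Rightarrow> real \<Rightarrow> real \<Rightarrow> real \<Rightarrow> nat \<Rightarrow> real" where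
  "leaf a b u v t j = (if j \<le> a then u else if j \<le> b div 2 then t
      else if j \<le> (b+1) div 2 then sqrt (t * v) else v)"

lemma prod_leaf:
  assumes "a \<le> b div 2" "(b+1) div 2 \<le> N"
  shows "(\<Prod>j\<in>{1..N}. leaf a b u v t j) =
     u^a * t^(b div 2 - a) * sqrt (t * v)^((b+1) div 2 - b div 2) * v^(N - (b+1) div 2)"
proof -
  let ?h = "b div 2" and ?c = "(b+1) div 2" and ?L = "leaf a b u v t"
  have hc: "?h \<le> ?c" by simp
  have "(\<Prod>j\<in>{1..N}. ?L j) = (\<Prod>j\<in>{1..?c}. ?L j) * (\<Prod>j\<in>{?c+1..N}. ?L j)"
    using assms by (intro prod_split_ivl) auto
  moreover have "(\<Prod>j\<in>{1..?c}. ?L j) = (\<Prod>j\<in>{1..?h}. ?L j) * (\<Prod>j\<in>{?h+1..?c}. ?L j)"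
    using hc by (intro prod_split_ivl) 
  moreover have "(\<Prod>j\<in>{1..?h}. ?L j) = (\<Prod>j\<in>{1..a}. ?L j) * (\<Prod>j\<in>{a+1..?h}. ?L j)"
    using assms by (intro prod_split_ivl) auto
  moreover have "(\<Prod>j\<in>{1..a}. ?L j) = u^a"
    by (simp add: leaf_def)
  moreover have "(\<Prod>j\<in>{a+1..?h}. ?L j) = t^(?h - a)"
  proof -
    have "(\<Prod>j\<in>{a+1..?h}. ?L j) = (\<Prod>j\<in>{a+1..?h}. t)"
      by (intro prod.cong) (auto simp: leaf_def)
    then show ?thesis by simp
  qed
  moreover have "(\<Prod>j\<in>{?h+1..?c}. ?L j) = sqrt (t * v)^(?c - ?h)"
  proof -
    have "(\<Prod>j\<in>{?h+1..?c}. ?L j) = (\<Prod>j\<in>{?h+1..?c}. sqrt (t * v))"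
      using assms by (intro prod.cong) (auto simp: leaf_def)
    then show ?thesis by simp
  qed
  moreover have "(\<Prod>j\<in>{?c+1..N}. ?L j) = v^(N - ?c)"
  proof -
    have "(\<Prod>j\<in>{?c+1..N}. ?L j) = (\<Prod>j\<in>{?c+1..N}. v)"
      using assms by (intro prod.cong) (auto simp: leaf_def)
    then show ?thesis by simp
  qed
  ultimately show ?thesis by (simp only: mult.assoc)
qed

lemma alg_equiv:
  fixes u v t :: real and a b N :: nat
  assumes u: "0 \<le> u" and v: "0 \<le> v" and t: "0 \<le> t" and ab: "2*a < b"
    and cN: "(b+1) div 2 \<le> N" and N: "1 \<le> N"
  shows "v^N \<le> u^a * t^(b div 2 - a) * sqrt (t * v)^((b+1) div 2 - b div 2) * v^(N - (b+1) div 2)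
     \<longleftrightarrow> v^b \<le> u^(2*a) * t^(b - 2*a)"
proof (cases "v = 0")
  case True
  then show ?thesis using N ab u t by (simp add: zero_power)
next
  case False
  then have vp: "0 < v" using v by simp
  define h where "h = b div 2"
  define c where "c = (b+1) div 2"
  define Q where "Q = u^a * t^(h - a) * sqrt (t * v)^(c - h)"
  have Q0: "0 \<le> Q" unfolding Q_def using u v t by simp
  have "v^N = v^c * v^(N-c)" using cN unfolding c_def by (simp add: power_add[symmetric])
  then have "(v^N \<le> Q * v^(N-c)) \<longleftrightarrow> v^c \<le> Q" using vp by simp
  also have "\<dots> \<longleftrightarrow> (v^c)^2 \<le> Q^2" using Q0 v by simp
  also have "\<dots> \<longleftrightarrow> v^b \<le> u^(2*a) * t^(b - 2*a)"
  proof (cases "even b")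
    case True
    then have "c = h" "2*c = b" unfolding c_def h_def by auto
    moreover have "2*(h-a) = b - 2*a" using True unfolding h_def by auto
    ultimately have "(v^c)^2 = v^b" "Q^2 = u^(2*a) * t^(b - 2*a)" unfolding Q_def
      by (simp_all add: power_mult[symmetric] power_mult_distrib mult.commute)
    then show ?thesis by simp
  next
    case False
    then have "c = h + 1" "2*h + 1 = b" unfolding c_def h_def by presburger+
    moreover have "b - 2*a = Suc (2*(h-a))" using \<open>2*h+1 = b\<close> ab by auto
    moreover have "(v^c)^2 = v^b * v"
    proof -
      have "(v^c)^2 = v^(c*2)" by (simp add: power_mult)
      also have "c*2 = b + 1" using \<open>c = h + 1\<close> \<open>2*h+1 = b\<close> by simp
      finally show ?thesis by simp
    qed
    ultimately have "(v^c)^2 = v^b * v" "Q^2 = (u^(2*a) * t^(b - 2*a)) * v" unfolding Q_def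
      using t v by (simp_all add: power_mult[symmetric] power_mult_distrib mult_ac)
    then show ?thesis using vp by simp
  qed
  finally show ?thesis unfolding Q_def h_def c_def by (simp add: mult.assoc)
qed

lemma powr_equiv:
  fixes u v t p :: real and a b :: nat
  assumes u: "0 \<le> u" and v: "0 \<le> v" and t: "0 \<le> t" and ab: "2*a < b" and a: "0 < a"
    and p: "p = real b / real a"
  shows "v powr (p/(p-2)) \<le> t * u powr (2/(p-2)) \<longleftrightarrow> v^b \<le> u^(2*a) * t^(b - 2*a)"
proof -
  define d where "d = real (b - 2*a)"
  have dp: "0 < d" using ab unfolding d_def by simp
  have d': "d = real b - 2 * real a" using ab unfolding d_def by simp
  have e1: "p/(p-2) = real b / d" using a ab unfolding p d' by (simp add: field_simps)
  have e2: "2/(p-2) = 2 * real a / d" using a ab unfolding p d' by (simp add: field_simps)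
  have mono: "x \<le> y \<longleftrightarrow> x powr d \<le> y powr d" if hx: "0 \<le> x" and hy: "0 \<le> y" for x y :: real
  proof
    assume "x \<le> y" then show "x powr d \<le> y powr d" using hx dp by (intro powr_mono2) auto
  next
    assume "x powr d \<le> y powr d"
    then have "(x powr d) powr (1/d) \<le> (y powr d) powr (1/d)"
      using dp powr_mono2[of "1/d" "x powr d" "y powr d"] by auto
    then show "x \<le> y" using dp hx hy by (simp add: powr_powr powr_one)
  qed
  have l: "(v powr (real b / d)) powr d = v^b"
    using dp v ab by (simp add: powr_powr powr_realpow')
  have r: "(t * u powr (2 * real a / d)) powr d = u^(2*a) * t^(b - 2*a)"
  proof -
    have "(t * u powr (2 * real a / d)) powr d = t powr d * u powr (2 * real a)"
      using dp by (simp add: powr_mult powr_powr)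
    also have "\<dots> = t^(b - 2*a) * u^(2*a)"
      using powr_realpow'[OF t, of "b - 2*a"] powr_realpow'[OF u, of "2*a"] ab a
      unfolding d_def by simp
    finally show ?thesis by simp
  qed
  show ?thesis unfolding e1 e2 using mono[of "v powr (real b / d)" "t * u powr (2 * real a / d)"] l r u t
    by simp
qed

fun gtree :: "(nat \<Rightarrow> real) \<Rightarrow> nat \<Rightarrow> nat \<Rightarrow> real" where
  "gtree L 0 j = L j"
| "gtree L (Suc m) j = sqrt (gtree L m (2*j-1) * gtree L m (2*j))"

lemma gtree_nonneg: "(\<And>j. 0 \<le> L j) \<Longrightarrow> 0 \<le> gtree L m j"
  by (induction m arbitrary: j) auto

lemma leaf_nonneg: "0 \<le> u \<Longrightarrow> 0 \<le> v \<Longrightarrow> 0 \<le> t \<Longrightarrow> 0 \<le> leaf a b u v t j"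
  by (simp add: leaf_def)

lemma prod_12: "(\<Prod>j\<in>{1..2::nat}. f j) = (f 1 * f 2 :: real)"
proof -
  have "{1..2::nat} = {1,2}" by auto
  then show ?thesis by simp
qed

theorem proposition3p6:
  fixes p :: real and a b k :: nat
  assumes "p \<in> \<rat>" and "p > 2"
    and "coprime a b" and "1 / p = real a / real b"
    and "k = nat \<lceil>log 2 (real b + 1)\<rceil>"
  shows "{(u, v, t). u \<ge> 0 \<and> v \<ge> 0 \<and> t \<ge> 0 \<and>
            v powr (p / (p - 2)) \<le> t * u powr (2 / (p - 2))}
       = {(u, v, t). \<exists>z :: nat \<Rightarrow> nat \<Rightarrow> real.
            norm (v, (z 1 1 - z 1 2) / 2) \<le> (z 1 1 + z 1 2) / 2
          \<and> (\<forall>i\<in>{1..k-2}. \<forall>j\<in>{1..2^i}.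
               norm (z i j, (z (i+1) (2*j-1) - z (i+1) (2*j)) / 2)
                 \<le> (z (i+1) (2*j-1) + z (i+1) (2*j)) / 2)
          \<and> (\<forall>j\<in>{1..a}. z (k-1) j \<le> u)
          \<and> (\<forall>j\<in>{a+1..b div 2}. z (k-1) j \<le> t)
          \<and> (\<forall>j\<in>{b div 2 + 1..(b+1) div 2}. norm (z (k-1) j, (t - v) / 2) \<le> (t + v) / 2)
          \<and> (\<forall>j\<in>{(b+1) div 2 + 1..2^(k-1)}. z (k-1) j \<le> v)
          \<and> (\<forall>i\<in>{1..k-1}. \<forall>j\<in>{1..2^i}. z i j \<ge> 0)
          \<and> u \<ge> 0 \<and> v \<ge> 0 \<and> t \<ge> 0}"
proof -
  have p0: "p > 0" using assms(2) by simp
  have a0: "a > 0"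
  proof (rule ccontr)
    assume "\<not> a > 0" then have "a = 0" by simp
    then show False using assms(4) p0 by simp
  qed
  have b0: "b > 0"
  proof (rule ccontr)
    assume "\<not> b > 0" then have "b = 0" by simp
    then show False using assms(4) p0 by simp
  qed
  have pba: "p = real b / real a" using assms(4) a0 b0 p0 by (simp add: field_simps)
  have ab: "2*a < b"
  proof -
    have "2 < real b / real a" using assms(2) pba by simp
    then have "2 * real a < real b" using a0 by (simp add: field_simps)
    then show ?thesis by linarith
  qed
  have lg: "log 2 (real b + 1) \<le> real k"
  proof -
    have "0 \<le> log 2 (real b + 1)" by simp
    then show ?thesis unfolding assms(5) by linarith
  qed
  have pk: "real b + 1 \<le> 2^k"
  proof -
    have "real b + 1 = 2 powr log 2 (real b + 1)" by simp
    also have "\<dots> \<le> 2 powr real k" using lg by (rule powr_mono) simp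
    also have "\<dots> = 2^k" by (simp add: powr_realpow)
    finally show ?thesis .
  qed
  have k2: "k \<ge> 2"
  proof (rule ccontr)
    assume "\<not> k \<ge> 2" then have "k \<le> 1" by simp
    then have "(2::real)^k \<le> 2^1" by (intro power_increasing) auto
    moreover have "b \<ge> 3" using ab a0 by simp
    then have "real b \<ge> 3" by simp
    ultimately show False using pk by simp
  qed
  define n where "n = k - 1"
  have n1: "1 \<le> n" using k2 unfolding n_def by simp
  have kn: "k - 2 = n - 1" unfolding n_def by simp
  have kS: "k = Suc n" using k2 unfolding n_def by simp
  have Nk: "(2::nat)^k = 2 * 2^n" unfolding kS by simp
  have cN: "(b+1) div 2 \<le> 2^n"
  proof -
    have "real (b + 1) \<le> real (2^k)" using pk by simp
    then have "b + 1 \<le> 2 * 2^n" using Nk by linarith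
    then show ?thesis by simp
  qed
  have N1: "1 \<le> (2::nat)^n" by simp
  have haf: "a \<le> b div 2" using ab by simp
  have hc0: "b div 2 \<le> (b+1) div 2" by simp
  have nS: "n = Suc (n-1)" using n1 by simp
  have Npow: "(2::nat)^n = 2 * 2^(n-1)" by (subst nS) simp
  note AE = alg_equiv[OF _ _ _ ab cN N1]
  note PE = powr_equiv[OF _ _ _ ab a0 pba]
  note PL = prod_leaf[OF haf cN]
  have key: "(u \<ge> 0 \<and> v \<ge> 0 \<and> t \<ge> 0 \<and> v powr (p / (p - 2)) \<le> t * u powr (2 / (p - 2)))
     \<longleftrightarrow> (\<exists>z :: nat \<Rightarrow> nat \<Rightarrow> real.
            norm (v, (z 1 1 - z 1 2) / 2) \<le> (z 1 1 + z 1 2) / 2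
          \<and> (\<forall>i\<in>{1..k-2}. \<forall>j\<in>{1..2^i}.
               norm (z i j, (z (i+1) (2*j-1) - z (i+1) (2*j)) / 2)
                 \<le> (z (i+1) (2*j-1) + z (i+1) (2*j)) / 2)
          \<and> (\<forall>j\<in>{1..a}. z (k-1) j \<le> u)
          \<and> (\<forall>j\<in>{a+1..b div 2}. z (k-1) j \<le> t)
          \<and> (\<forall>j\<in>{b div 2 + 1..(b+1) div 2}. norm (z (k-1) j, (t - v) / 2) \<le> (t + v) / 2)
          \<and> (\<forall>j\<in>{(b+1) div 2 + 1..2^(k-1)}. z (k-1) j \<le> v)
          \<and> (\<forall>i\<in>{1..k-1}. \<forall>j\<in>{1..2^i}. z i j \<ge> 0)
          \<and> u \<ge> 0 \<and> v \<ge> 0 \<and> t \<ge> 0)" for u v t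
  proof
    assume H: "u \<ge> 0 \<and> v \<ge> 0 \<and> t \<ge> 0 \<and> v powr (p / (p - 2)) \<le> t * u powr (2 / (p - 2))"
    then have u: "u \<ge> 0" and v: "v \<ge> 0" and t: "t \<ge> 0" by auto
    let ?L = "leaf a b u v t"
    have vb: "v^b \<le> u^(2*a) * t^(b - 2*a)" using H PE[OF u v t] by simp
    have vN: "v^(2^n) \<le> (\<Prod>j\<in>{1..2^n}. ?L j)" using vb AE[OF u v t] PL by simp
    have Lnn: "\<And>j. 0 \<le> ?L j" using leaf_nonneg[OF u v t] by simp
    define z where "z i j = gtree ?L (n - i) j" for i j
    have znn: "\<And>i j. 0 \<le> z i j" unfolding z_def using gtree_nonneg[OF Lnn] by simp
    have zleaf: "\<And>j. z n j = ?L j" unfolding z_def by simp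
    have zstep: "\<And>i j. i < n \<Longrightarrow> z i j = sqrt (z (i+1) (2*j-1) * z (i+1) (2*j))"
    proof -
      fix i j :: nat assume "i < n"
      then have "n - i = Suc (n - (i+1))" by simp
      then show "z i j = sqrt (z (i+1) (2*j-1) * z (i+1) (2*j))" unfolding z_def by simp
    qed
    have zsq: "\<And>i j. i < n \<Longrightarrow> (z i j)^2 = z (i+1) (2*j-1) * z (i+1) (2*j)"
      using zstep znn by (simp add: mult_nonneg_nonneg)
    define P where "P i = (\<Prod>j\<in>{1..2^i}. z i j)" for i
    have Pstep: "P i ^ 2 = P (i+1)" if "1 \<le> i" "i < n" for i
    proof -
      have "P i ^ 2 = (\<Prod>j\<in>{1..2^i}. (z i j)^2)" unfolding P_def by (simp add: prod_power_distrib)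
      also have "\<dots> = (\<Prod>j\<in>{1..2^i}. z (i+1) (2*j-1) * z (i+1) (2*j))"
        using zsq that by simp
      also have "\<dots> = (\<Prod>j\<in>{1..2*2^i}. z (i+1) j)" by (rule prod_pairs[symmetric])
      also have "\<dots> = P (i+1)" unfolding P_def by simp
      finally show ?thesis .
    qed
    have "P 1 ^ (2^(n-1)) = P n" using tree_eq[of n P] Pstep n1 by simp
    also have "P n = (\<Prod>j\<in>{1..2^n}. ?L j)" unfolding P_def using zleaf by simp
    finally have P1: "P 1 ^ (2^(n-1)) = (\<Prod>j\<in>{1..2^n}. ?L j)" .
    have P1z: "P 1 = z 1 1 * z 1 2" using prod_12[of "z 1"] by (simp add: P_def)
    have "(v^2)^(2^(n-1)) = v^(2^n)" using Npow by (simp add: power_mult[symmetric])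
    also have "\<dots> \<le> P 1 ^ (2^(n-1))" using vN P1 by simp
    finally have "(v^2)^(2^(n-1)) \<le> P 1 ^ (2^(n-1))" .
    then have v2: "v^2 \<le> z 1 1 * z 1 2" using P1z znn
      by (metis power_mono_iff zero_le_power2 mult_nonneg_nonneg zero_less_numeral zero_less_power)
    show "\<exists>z :: nat \<Rightarrow> nat \<Rightarrow> real.
            norm (v, (z 1 1 - z 1 2) / 2) \<le> (z 1 1 + z 1 2) / 2
          \<and> (\<forall>i\<in>{1..k-2}. \<forall>j\<in>{1..2^i}.
               norm (z i j, (z (i+1) (2*j-1) - z (i+1) (2*j)) / 2)
                 \<le> (z (i+1) (2*j-1) + z (i+1) (2*j)) / 2)
          \<and> (\<forall>j\<in>{1..a}. z (k-1) j \<le> u)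
          \<and> (\<forall>j\<in>{a+1..b div 2}. z (k-1) j \<le> t)
          \<and> (\<forall>j\<in>{b div 2 + 1..(b+1) div 2}. norm (z (k-1) j, (t - v) / 2) \<le> (t + v) / 2)
          \<and> (\<forall>j\<in>{(b+1) div 2 + 1..2^(k-1)}. z (k-1) j \<le> v)
          \<and> (\<forall>i\<in>{1..k-1}. \<forall>j\<in>{1..2^i}. z i j \<ge> 0)
          \<and> u \<ge> 0 \<and> v \<ge> 0 \<and> t \<ge> 0"
    proof (intro exI[of _ z] conjI ballI)
      show "norm (v, (z 1 1 - z 1 2) / 2) \<le> (z 1 1 + z 1 2) / 2"
        unfolding norm_pair_iff using v2 znn[of 1 1] znn[of 1 2] by simp
    next
      fix i j :: nat assume i: "i \<in> {1..k-2}" and j: "j \<in> {1..2^i}"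
      then have "i < n" using kn n1 by auto
      then show "norm (z i j, (z (i+1) (2*j-1) - z (i+1) (2*j)) / 2)
                 \<le> (z (i+1) (2*j-1) + z (i+1) (2*j)) / 2"
        unfolding norm_pair_iff using zsq znn[of "i+1" "2*j-1"] znn[of "i+1" "2*j"] by simp
    next
      fix j assume "j \<in> {1..a}"
      then show "z (k-1) j \<le> u" using zleaf unfolding n_def by (simp add: leaf_def)
    next
      fix j assume "j \<in> {a+1..b div 2}"
      then show "z (k-1) j \<le> t" using zleaf unfolding n_def by (simp add: leaf_def)
    next
      fix j assume "j \<in> {b div 2 + 1..(b+1) div 2}"
      then have "z (k-1) j = sqrt (t * v)" using zleaf haf unfolding n_def by (simp add: leaf_def)
      then show "norm (z (k-1) j, (t - v) / 2) \<le> (t + v) / 2"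
        unfolding norm_pair_iff using u v t by (simp add: mult_nonneg_nonneg)
    next
      fix j assume "j \<in> {(b+1) div 2 + 1..2^(k-1)}"
      then have j1: "(b+1) div 2 < j" by simp
      then have "\<not> j \<le> b div 2" "\<not> j \<le> a" "\<not> j \<le> (b+1) div 2" using hc0 haf by linarith+
      then show "z (k-1) j \<le> v" using zleaf unfolding n_def by (simp add: leaf_def)
    next
      fix i j :: nat show "z i j \<ge> 0" by (rule znn)
    qed (use u v t in auto)
  next
    assume "\<exists>z :: nat \<Rightarrow> nat \<Rightarrow> real.
            norm (v, (z 1 1 - z 1 2) / 2) \<le> (z 1 1 + z 1 2) / 2
          \<and> (\<forall>i\<in>{1..k-2}. \<forall>j\<in>{1..2^i}.
               norm (z i j, (z (i+1) (2*j-1) - z (i+1) (2*j)) / 2)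
                 \<le> (z (i+1) (2*j-1) + z (i+1) (2*j)) / 2)
          \<and> (\<forall>j\<in>{1..a}. z (k-1) j \<le> u)
          \<and> (\<forall>j\<in>{a+1..b div 2}. z (k-1) j \<le> t)
          \<and> (\<forall>j\<in>{b div 2 + 1..(b+1) div 2}. norm (z (k-1) j, (t - v) / 2) \<le> (t + v) / 2)
          \<and> (\<forall>j\<in>{(b+1) div 2 + 1..2^(k-1)}. z (k-1) j \<le> v)
          \<and> (\<forall>i\<in>{1..k-1}. \<forall>j\<in>{1..2^i}. z i j \<ge> 0)
          \<and> u \<ge> 0 \<and> v \<ge> 0 \<and> t \<ge> 0"
    then obtain z :: "nat \<Rightarrow> nat \<Rightarrow> real" where
      H1: "norm (v, (z 1 1 - z 1 2) / 2) \<le> (z 1 1 + z 1 2) / 2"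
      and H2: "\<forall>i\<in>{1..k-2}. \<forall>j\<in>{1..2^i}.
               norm (z i j, (z (i+1) (2*j-1) - z (i+1) (2*j)) / 2)
                 \<le> (z (i+1) (2*j-1) + z (i+1) (2*j)) / 2"
      and H3: "\<forall>j\<in>{1..a}. z (k-1) j \<le> u"
      and H4: "\<forall>j\<in>{a+1..b div 2}. z (k-1) j \<le> t"
      and H5: "\<forall>j\<in>{b div 2 + 1..(b+1) div 2}. norm (z (k-1) j, (t - v) / 2) \<le> (t + v) / 2"
      and H6: "\<forall>j\<in>{(b+1) div 2 + 1..2^(k-1)}. z (k-1) j \<le> v"
      and H7: "\<forall>i\<in>{1..k-1}. \<forall>j\<in>{1..2^i}. z i j \<ge> 0"
      and u: "u \<ge> 0" and v: "v \<ge> 0" and t: "t \<ge> 0"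
      by blast
    let ?L = "leaf a b u v t"
    define P where "P i = (\<Prod>j\<in>{1..2^i}. z i j)" for i
    have Pnn: "0 \<le> P i" if "1 \<le> i" "i \<le> n" for i
      unfolding P_def using H7 that unfolding n_def by (intro prod_nonneg) auto
    have Pstep: "P i ^ 2 \<le> P (i+1)" if "1 \<le> i" "i < n" for i
    proof -
      have "P i ^ 2 = (\<Prod>j\<in>{1..2^i}. (z i j)^2)" unfolding P_def by (simp add: prod_power_distrib)
      also have "\<dots> \<le> (\<Prod>j\<in>{1..2^i}. z (i+1) (2*j-1) * z (i+1) (2*j))"
      proof (rule prod_mono)
        fix j :: nat assume j: "j \<in> {1..2^i}"
        have "i \<in> {1..k-2}" using that kn by auto
        then have "norm (z i j, (z (i+1) (2*j-1) - z (i+1) (2*j)) / 2)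
                 \<le> (z (i+1) (2*j-1) + z (i+1) (2*j)) / 2" using H2 j by blast
        then show "0 \<le> (z i j)^2 \<and> (z i j)^2 \<le> z (i+1) (2*j-1) * z (i+1) (2*j)"
          unfolding norm_pair_iff by simp
      qed
      also have "\<dots> = (\<Prod>j\<in>{1..2*2^i}. z (i+1) j)" by (rule prod_pairs[symmetric])
      also have "\<dots> = P (i+1)" unfolding P_def by simp
      finally show ?thesis .
    qed
    have T: "P 1 ^ (2^(n-1)) \<le> P n" using tree_le[of n P] Pstep Pnn n1 by simp
    have Pn: "P n \<le> (\<Prod>j\<in>{1..2^n}. ?L j)"
      unfolding P_def
    proof (rule prod_mono)
      fix j :: nat assume j: "j \<in> {1..2^n}"
      have z0: "0 \<le> z n j" using H7 j n1 unfolding n_def by auto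
      have "z n j \<le> ?L j"
      proof (cases "j \<le> a")
        case True then show ?thesis using H3 j unfolding n_def by (simp add: leaf_def)
      next
        case F1: False
        show ?thesis
        proof (cases "j \<le> b div 2")
          case True then show ?thesis using F1 H4 j unfolding n_def by (simp add: leaf_def)
        next
          case F2: False
          show ?thesis
          proof (cases "j \<le> (b+1) div 2")
            case True
            then have "norm (z n j, (t - v) / 2) \<le> (t + v) / 2" using F2 H5 unfolding n_def by simp
            then have "(z n j)^2 \<le> t * v" unfolding norm_pair_iff by simp
            then have "z n j \<le> sqrt (t * v)" by (rule real_le_rsqrt)
            then show ?thesis using True F1 F2 by (simp add: leaf_def)
          next
            case False then show ?thesis using F1 F2 H6 j unfolding n_def by (simp add: leaf_def)
          qed
        qed
      qed
      then show "0 \<le> z n j \<and> z n j \<le> ?L j" using z0 by simp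
    qed
    have P1z: "P 1 = z 1 1 * z 1 2" using prod_12[of "z 1"] by (simp add: P_def)
    have v2: "v^2 \<le> z 1 1 * z 1 2" using H1 unfolding norm_pair_iff by simp
    have "v^(2^n) = (v^2)^(2^(n-1))" using Npow by (simp add: power_mult[symmetric])
    also have "\<dots> \<le> P 1 ^ (2^(n-1))" unfolding P1z using v2 by (intro power_mono) auto
    also have "\<dots> \<le> (\<Prod>j\<in>{1..2^n}. ?L j)" using T Pn by linarith
    finally have "v^(2^n) \<le> (\<Prod>j\<in>{1..2^n}. ?L j)" .
    then have "v^b \<le> u^(2*a) * t^(b - 2*a)" using AE[OF u v t] PL by simp
    then show "u \<ge> 0 \<and> v \<ge> 0 \<and> t \<ge> 0 \<and> v powr (p / (p - 2)) \<le> t * u powr (2 / (p - 2))"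
      using PE[OF u v t] u v t by simp
  qed
  show ?thesis
    apply (rule set_eqI)
    subgoal for x
      apply (cases x rule: prod_cases3)
      apply (simp only: mem_Collect_eq case_prod_conv)
      apply (rule key)
      done
    done
qed

end
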